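(* Let $M,N,P$ be regular languages over $\Sigma$ with state complexities $m,n,p\geq 3$ respectively. Then $$\mathrm{sc}(M\cdot(N\oplus P))\leq (m-1)\alpha_{n,p}+\alpha'_{n,p}.$$
   Context: $\mathrm{sc}(L)$ is the number of states of the minimal complete DFA of $L$; $\oplus$ is symmetric difference and $\cdot$ is concatenation. An $n\times p$ tableau is a subset $S$ of an $n\times p$ grid of cells; it is saturated if whenever cells $(x,x'),(x,y'),(y,y')$ are in $S$ then $(y,x')\in S$. $\alpha_{n,p}$ denotes the number of saturated $n\times p$ tableaux, and $\alpha'_{n,p}$ the number of saturated $n\times p$ tableaux containing a fixed given cell (this number does not depend on the cell). *)

theory Defs
  imports Main
begin

definition is_dfa :: "'a set \<Rightarrow> nat \<Rightarrow> nat \<Rightarrow> (nat \<Rightarrow> 'a \<Rightarrow> nat) \<Rightarrow> nat set \<Rightarrow> bool" where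
  "is_dfa \<Sigma> k q0 \<delta> F \<longleftrightarrow> q0 < k \<and> (\<forall>q<k. \<forall>a\<in>\<Sigma>. \<delta> q a < k) \<and> F \<subseteq> {..<k}"

definition dfa_lang :: "'a set \<Rightarrow> nat \<Rightarrow> (nat \<Rightarrow> 'a \<Rightarrow> nat) \<Rightarrow> nat set \<Rightarrow> 'a list set" where
  "dfa_lang \<Sigma> q0 \<delta> F = {w \<in> lists \<Sigma>. foldl \<delta> q0 w \<in> F}"

definition regular_lang :: "'a set \<Rightarrow> 'a list set \<Rightarrow> bool" where
  "regular_lang \<Sigma> L \<longleftrightarrow> (\<exists>k q0 \<delta> F. is_dfa \<Sigma> k q0 \<delta> F \<and> dfa_lang \<Sigma> q0 \<delta> F = L)"

definition sc :: "'a set \<Rightarrow> 'a list set \<Rightarrow> nat" where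
  "sc \<Sigma> L = (LEAST k. \<exists>q0 \<delta> F. is_dfa \<Sigma> k q0 \<delta> F \<and> dfa_lang \<Sigma> q0 \<delta> F = L)"

definition lang_conc :: "'a list set \<Rightarrow> 'a list set \<Rightarrow> 'a list set" where
  "lang_conc A B = {u @ v | u v. u \<in> A \<and> v \<in> B}"

definition sym_diff :: "'a list set \<Rightarrow> 'a list set \<Rightarrow> 'a list set" where
  "sym_diff A B = (A - B) \<union> (B - A)"

definition saturated :: "(nat \<times> nat) set \<Rightarrow> bool" where
  "saturated S \<longleftrightarrow> (\<forall>x y x' y'. (x, x') \<in> S \<and> (x, y') \<in> S \<and> (y, y') \<in> S \<longrightarrow> (y, x') \<in> S)"

definition alpha :: "nat \<Rightarrow> nat \<Rightarrow> nat" where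
  "alpha n p = card {S. S \<subseteq> {0..<n} \<times> {0..<p} \<and> saturated S}"

text \<open>Number of saturated tableaux containing a fixed cell; we fix the cell \<open>(0,0)\<close>.\<close>
definition alpha' :: "nat \<Rightarrow> nat \<Rightarrow> nat" where
  "alpha' n p = card {S. S \<subseteq> {0..<n} \<times> {0..<p} \<and> saturated S \<and> (0, 0) \<in> S}"

end

theory Submission
  imports Defs
begin


lemma sc_le_card:
  fixes Q :: "'s set" and \<delta> :: "'s \<Rightarrow> 'a \<Rightarrow> 's"
  assumes fin: "finite Q" and s0: "s0 \<in> Q" and cl: "\<And>s a. s \<in> Q \<Longrightarrow> a \<in> \<Sigma> \<Longrightarrow> \<delta> s a \<in> Q"
  shows "sc \<Sigma> {w \<in> lists \<Sigma>. foldl \<delta> s0 w \<in> F} \<le> card Q"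
proof -
  obtain f where bij: "bij_betw f Q {0..<card Q}" using ex_bij_betw_finite_nat[OF fin] by blast
  have inj: "inj_on f Q" and img: "f ` Q = {0..<card Q}" using bij by (auto simp: bij_betw_def)
  define g where "g = the_inv_into Q f"
  have gf: "\<And>s. s \<in> Q \<Longrightarrow> g (f s) = s" unfolding g_def using inj by (simp add: the_inv_into_f_f)
  define \<delta>' where "\<delta>' = (\<lambda>i a. f (\<delta> (g i) a))"
  have run: "foldl \<delta>' (f s) w = f (foldl \<delta> s w) \<and> foldl \<delta> s w \<in> Q" if "s \<in> Q" "w \<in> lists \<Sigma>" for s w
    using that
  proof (induction w arbitrary: s)
    case Nil then show ?case by simp
  next
    case (Cons a w)
    then have "\<delta> s a \<in> Q" using cl by auto
    moreover have "\<delta>' (f s) a = f (\<delta> s a)" using Cons by (simp add: \<delta>'_def gf)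
    ultimately show ?case using Cons by simp
  qed
  have dfa: "is_dfa \<Sigma> (card Q) (f s0) \<delta>' (f ` (F \<inter> Q))"
    unfolding is_dfa_def
  proof (intro conjI allI impI ballI)
    show "f s0 < card Q" using s0 img by auto
  next
    fix q a assume "q < card Q" "a \<in> \<Sigma>"
    then obtain s where "s \<in> Q" "q = f s" using img by (metis atLeastLessThan_iff imageE zero_le)
    then show "\<delta>' q a < card Q" using img cl \<open>a \<in> \<Sigma>\<close> by (auto simp: \<delta>'_def gf)
  next
    show "f ` (F \<inter> Q) \<subseteq> {..<card Q}" using img by auto
  qed
  have lang: "dfa_lang \<Sigma> (f s0) \<delta>' (f ` (F \<inter> Q)) = {w \<in> lists \<Sigma>. foldl \<delta> s0 w \<in> F}"
  proof -
    have "foldl \<delta>' (f s0) w \<in> f ` (F \<inter> Q) \<longleftrightarrow> foldl \<delta> s0 w \<in> F" if "w \<in> lists \<Sigma>" for w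
    proof -
      have r: "foldl \<delta>' (f s0) w = f (foldl \<delta> s0 w)" "foldl \<delta> s0 w \<in> Q" using run[OF s0 that] by auto
      show ?thesis unfolding r(1) using r(2) inj by (auto simp: inj_on_image_mem_iff)
    qed
    then show ?thesis unfolding dfa_lang_def by auto
  qed
  show ?thesis unfolding sc_def
    by (rule Least_le) (use dfa lang in blast)
qed



lemma fold_lt: "is_dfa \<Sigma> k q0 \<delta> F \<Longrightarrow> q < k \<Longrightarrow> w \<in> lists \<Sigma> \<Longrightarrow> foldl \<delta> q w < k"
  by (induction w arbitrary: q) (auto simp: is_dfa_def)

lemma split_ex:
  "(\<exists>u v. a # w = u @ v \<and> u \<noteq> [] \<and> foldl d q u \<in> FM \<and> V v) \<longleftrightarrow>
   (d q a \<in> FM \<and> V w) \<or> (\<exists>u v. w = u @ v \<and> u \<noteq> [] \<and> foldl d (d q a) u \<in> FM \<and> V v)"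
  (is "?L \<longleftrightarrow> ?R")
proof
  assume ?L
  then obtain u v where h: "a # w = u @ v" "u \<noteq> []" "foldl d q u \<in> FM" "V v" by blast
  then obtain u' where u: "u = a # u'" by (cases u) auto
  show ?R
  proof (cases "u' = []")
    case True then show ?thesis using h u by auto
  next
    case False then show ?thesis using h u by auto
  qed
next
  assume ?R
  then show ?L
  proof
    assume "d q a \<in> FM \<and> V w" then show ?L by (intro exI[of _ "[a]"] exI[of _ w]) auto
  next
    assume "\<exists>u v. w = u @ v \<and> u \<noteq> [] \<and> foldl d (d q a) u \<in> FM \<and> V v"
    then obtain u v where "w = u @ v" "foldl d (d q a) u \<in> FM" "V v" by blast
    then show ?L by (intro exI[of _ "a # u"] exI[of _ v]) auto
  qed
qed

locale three =
  fixes \<Sigma> :: "'a set" and m qM dM FM n qN dN FN p qP dP FP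
  assumes M: "is_dfa \<Sigma> m qM dM FM" and N: "is_dfa \<Sigma> n qN dN FN" and P: "is_dfa \<Sigma> p qP dP FP"
begin

definition "grid = {0..<n} \<times> {0..<p}"
definition "val x y v \<longleftrightarrow> (foldl dN x v \<in> FN) \<noteq> (foldl dP y v \<in> FP)"
definition "acc S v \<longleftrightarrow> (\<exists>(x,y)\<in>S. val x y v)"
definition "sat X = \<Inter>{T. X \<subseteq> T \<and> T \<subseteq> grid \<and> saturated T}"
definition "img S a = (\<lambda>(x,y). (dN x a, dP y a)) ` S"
definition "E q = (if q \<in> FM then {(qN,qP)} else {})"
definition "step s a = (dM (fst s) a, sat (img (snd s) a \<union> E (dM (fst s) a)))"
definition "init = (qM, sat (E qM))"
definition "Fin = {s. acc (snd s) []}"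
definition "Q = {(q,S). q < m \<and> S \<subseteq> grid \<and> saturated S \<and> (q \<in> FM \<longrightarrow> (qN,qP) \<in> S)}"

lemma qN: "qN < n" and qP: "qP < p" and qM: "qM < m"
  using M N P by (auto simp: is_dfa_def)

lemma grid_sat: "saturated grid" unfolding saturated_def grid_def by auto

lemma sat_sub: "X \<subseteq> grid \<Longrightarrow> X \<subseteq> sat X" unfolding sat_def by auto
lemma sat_grid: "X \<subseteq> grid \<Longrightarrow> sat X \<subseteq> grid" unfolding sat_def using grid_sat by auto
lemma sat_saturated: "saturated (sat X)"
  unfolding saturated_def
proof (intro allI impI)
  fix x y x' y' assume h: "(x, x') \<in> sat X \<and> (x, y') \<in> sat X \<and> (y, y') \<in> sat X"
  show "(y, x') \<in> sat X" unfolding sat_def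
  proof (rule InterI)
    fix T assume "T \<in> {T. X \<subseteq> T \<and> T \<subseteq> grid \<and> saturated T}"
    then have T: "saturated T" and "(x, x') \<in> T \<and> (x, y') \<in> T \<and> (y, y') \<in> T"
      using h unfolding sat_def by auto
    then show "(y, x') \<in> T" unfolding saturated_def by blast
  qed
qed
lemma sat_least: "X \<subseteq> T \<Longrightarrow> T \<subseteq> grid \<Longrightarrow> saturated T \<Longrightarrow> sat X \<subseteq> T" unfolding sat_def by auto

lemma acc_img: "acc (img S a) v = acc S (a # v)"
  unfolding acc_def img_def val_def by (auto simp: split_beta)

lemma acc_Un: "acc (A \<union> B) v = (acc A v \<or> acc B v)" unfolding acc_def by auto
lemma acc_E: "acc (E q) v = (q \<in> FM \<and> val qN qP v)" unfolding acc_def E_def by auto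

lemma sat_acc:
  assumes X: "X \<subseteq> grid" and v: "v \<in> lists \<Sigma>"
  shows "acc (sat X) v = acc X v"
proof
  define T where "T = {c \<in> grid. \<forall>v\<in>lists \<Sigma>. val (fst c) (snd c) v \<longrightarrow> acc X v}"
  have "X \<subseteq> T" using X unfolding T_def acc_def by force
  moreover have "T \<subseteq> grid" unfolding T_def by auto
  moreover have "saturated T"
    unfolding saturated_def
  proof (intro allI impI)
    fix x y x' y' assume h: "(x, x') \<in> T \<and> (x, y') \<in> T \<and> (y, y') \<in> T"
    have "(y, x') \<in> grid" using h unfolding T_def grid_def by auto
    moreover have "\<forall>v\<in>lists \<Sigma>. val y x' v \<longrightarrow> acc X v"
    proof (intro ballI impI)
      fix v assume "v \<in> lists \<Sigma>" "val y x' v"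
      then have "val x x' v \<or> val x y' v \<or> val y y' v" unfolding val_def by blast
      then show "acc X v" using h \<open>v \<in> lists \<Sigma>\<close> unfolding T_def by auto
    qed
    ultimately show "(y, x') \<in> T" unfolding T_def by auto
  qed
  ultimately have "sat X \<subseteq> T" by (rule sat_least)
  then show "acc (sat X) v \<Longrightarrow> acc X v" using v unfolding acc_def
  proof -
    assume sub: "sat X \<subseteq> T" and a: "\<exists>(x, y)\<in>sat X. val x y v"
    then obtain x y where "(x,y) \<in> sat X" "val x y v" by blast
    then have "(x,y) \<in> T" using sub by blast
    then show "\<exists>(x, y)\<in>X. val x y v" using \<open>val x y v\<close> v unfolding T_def acc_def by auto
  qed
next
  show "acc X v \<Longrightarrow> acc (sat X) v" using sat_sub[OF X] unfolding acc_def by auto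
qed

lemma img_grid: "S \<subseteq> grid \<Longrightarrow> a \<in> \<Sigma> \<Longrightarrow> img S a \<subseteq> grid"
  using N P unfolding img_def grid_def is_dfa_def by auto

lemma E_grid: "E q \<subseteq> grid" using qN qP unfolding E_def grid_def by auto

lemma step_Q: "s \<in> Q \<Longrightarrow> a \<in> \<Sigma> \<Longrightarrow> step s a \<in> Q"
proof -
  assume s: "s \<in> Q" and a: "a \<in> \<Sigma>"
  obtain q S where qS: "s = (q, S)" by (cases s)
  have X: "img S a \<union> E (dM q a) \<subseteq> grid" using s qS img_grid[OF _ a] E_grid by (auto simp: Q_def)
  have "dM q a < m" using M s a qS by (auto simp: Q_def is_dfa_def)
  moreover have "dM q a \<in> FM \<longrightarrow> (qN, qP) \<in> sat (img S a \<union> E (dM q a))"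
    using sat_sub[OF X] by (auto simp: E_def)
  ultimately show ?thesis using sat_grid[OF X] sat_saturated qS by (simp add: step_def Q_def)
qed

lemma init_Q: "init \<in> Q"
proof -
  have "qM \<in> FM \<longrightarrow> (qN, qP) \<in> sat (E qM)" using sat_sub[OF E_grid, of qM] by (auto simp: E_def)
  then show ?thesis using sat_grid[OF E_grid, of qM] sat_saturated qM by (auto simp: init_def Q_def)
qed

lemma main:
  "(q, S) \<in> Q \<Longrightarrow> w \<in> lists \<Sigma> \<Longrightarrow> (foldl step (q, S) w \<in> Fin) \<longleftrightarrow>
    (acc S w \<or> (\<exists>u v. w = u @ v \<and> u \<noteq> [] \<and> foldl dM q u \<in> FM \<and> val qN qP v))"
proof (induction w arbitrary: q S)
  case Nil then show ?case by (simp add: Fin_def)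
next
  case (Cons a w)
  have a: "a \<in> \<Sigma>" and w: "w \<in> lists \<Sigma>" using Cons by auto
  have stQ: "step (q, S) a \<in> Q" using step_Q Cons a by auto
  have st: "step (q, S) a = (dM q a, sat (img S a \<union> E (dM q a)))" by (simp add: step_def)
  note stQ = stQ[unfolded st]
  have X: "img S a \<union> E (dM q a) \<subseteq> grid" using Cons img_grid[OF _ a] E_grid by (auto simp: Q_def)
  have "foldl step (q, S) (a # w) \<in> Fin \<longleftrightarrow>
    (acc (sat (img S a \<union> E (dM q a))) w \<or> (\<exists>u v. w = u @ v \<and> u \<noteq> [] \<and> foldl dM (dM q a) u \<in> FM \<and> val qN qP v))"
    using Cons.IH[of "dM q a" "sat (img S a \<union> E (dM q a))"] stQ w by (simp add: st)
  also have "acc (sat (img S a \<union> E (dM q a))) w = (acc S (a # w) \<or> (dM q a \<in> FM \<and> val qN qP w))"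
    using sat_acc[OF X w] by (simp add: acc_Un acc_img acc_E)
  finally show ?case using split_ex[of a w dM q FM "val qN qP"] by blast
qed

lemma lang: "{w \<in> lists \<Sigma>. foldl step init w \<in> Fin} =
   lang_conc (dfa_lang \<Sigma> qM dM FM) (sym_diff (dfa_lang \<Sigma> qN dN FN) (dfa_lang \<Sigma> qP dP FP))"
proof -
  have "foldl step init w \<in> Fin \<longleftrightarrow> (\<exists>u v. w = u @ v \<and> foldl dM qM u \<in> FM \<and> val qN qP v)"
    if w: "w \<in> lists \<Sigma>" for w
  proof -
    have "foldl step init w \<in> Fin \<longleftrightarrow> (qM \<in> FM \<and> val qN qP w) \<or>
        (\<exists>u v. w = u @ v \<and> u \<noteq> [] \<and> foldl dM qM u \<in> FM \<and> val qN qP v)"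
      using main[of qM "sat (E qM)" w] init_Q w sat_acc[OF E_grid w] acc_E
      by (simp add: init_def)
    also have "\<dots> \<longleftrightarrow> (\<exists>u v. w = u @ v \<and> foldl dM qM u \<in> FM \<and> val qN qP v)"
    proof
      assume "\<exists>u v. w = u @ v \<and> foldl dM qM u \<in> FM \<and> val qN qP v"
      then obtain u v where h: "w = u @ v" "foldl dM qM u \<in> FM" "val qN qP v" by blast
      then show "(qM \<in> FM \<and> val qN qP w) \<or> (\<exists>u v. w = u @ v \<and> u \<noteq> [] \<and> foldl dM qM u \<in> FM \<and> val qN qP v)"
        by (cases "u = []") auto
    qed (auto intro: exI[of _ "[]"])
    finally show ?thesis .
  qed
  note pw = this
  have sd: "v \<in> sym_diff (dfa_lang \<Sigma> qN dN FN) (dfa_lang \<Sigma> qP dP FP) \<longleftrightarrow> v \<in> lists \<Sigma> \<and> val qN qP v" for v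
    unfolding sym_diff_def dfa_lang_def val_def by auto
  show ?thesis
  proof (intro set_eqI iffI)
    fix w assume "w \<in> {w \<in> lists \<Sigma>. foldl step init w \<in> Fin}"
    then have w: "w \<in> lists \<Sigma>" and "foldl step init w \<in> Fin" by auto
    then obtain u v where h: "w = u @ v" "foldl dM qM u \<in> FM" "val qN qP v" using pw by blast
    then have "u \<in> dfa_lang \<Sigma> qM dM FM" "v \<in> sym_diff (dfa_lang \<Sigma> qN dN FN) (dfa_lang \<Sigma> qP dP FP)"
      using w sd by (auto simp: dfa_lang_def)
    then show "w \<in> lang_conc (dfa_lang \<Sigma> qM dM FM) (sym_diff (dfa_lang \<Sigma> qN dN FN) (dfa_lang \<Sigma> qP dP FP))"
      unfolding lang_conc_def using h(1) by blast
  next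
    fix w assume "w \<in> lang_conc (dfa_lang \<Sigma> qM dM FM) (sym_diff (dfa_lang \<Sigma> qN dN FN) (dfa_lang \<Sigma> qP dP FP))"
    then obtain u v where h: "w = u @ v" "u \<in> dfa_lang \<Sigma> qM dM FM" "v \<in> sym_diff (dfa_lang \<Sigma> qN dN FN) (dfa_lang \<Sigma> qP dP FP)"
      unfolding lang_conc_def by blast
    then have "u \<in> lists \<Sigma>" "foldl dM qM u \<in> FM" "v \<in> lists \<Sigma>" "val qN qP v" using sd by (auto simp: dfa_lang_def)
    moreover have "w \<in> lists \<Sigma>" using calculation h(1) by auto
    ultimately show "w \<in> {w \<in> lists \<Sigma>. foldl step init w \<in> Fin}" using pw[of w] h(1) by blast
  qed
qed

end


definition sw :: "nat \<Rightarrow> nat \<Rightarrow> nat" where "sw q x = (if x = 0 then q else if x = q then 0 else x)"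

lemma sw_sw: "sw q (sw q x) = x" unfolding sw_def by auto
lemma sw_lt: "q < n \<Longrightarrow> x < n \<Longrightarrow> sw q x < n" unfolding sw_def by auto

lemma alpha'_le: 
  assumes "a < n" "b < p"
  shows "card {S. S \<subseteq> {0..<n} \<times> {0..<p} \<and> saturated S \<and> (a, b) \<in> S} \<le> alpha' n p"
proof -
  define h where "h = (\<lambda>(x,y). (sw a x, sw b y))"
  have hh: "h (h c) = c" for c by (cases c) (simp add: h_def sw_sw)
  have hinj: "inj h" by (metis hh injI)
  have fin: "finite {S. S \<subseteq> {0..<n} \<times> {0..<p} \<and> saturated S \<and> (0, 0) \<in> S}"
    by (rule finite_subset[of _ "Pow ({0..<n} \<times> {0..<p})"]) auto
  show ?thesis unfolding alpha'_def
  proof (rule card_inj_on_le[where f="image h"])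
    show "inj_on (image h) {S. S \<subseteq> {0..<n} \<times> {0..<p} \<and> saturated S \<and> (a, b) \<in> S}"
      using hinj by (meson inj_image_eq_iff inj_onI)
  next
    show "image h ` {S. S \<subseteq> {0..<n} \<times> {0..<p} \<and> saturated S \<and> (a, b) \<in> S}
      \<subseteq> {S. S \<subseteq> {0..<n} \<times> {0..<p} \<and> saturated S \<and> (0, 0) \<in> S}"
    proof clarify
      fix S assume S: "S \<subseteq> {0..<n} \<times> {0..<p}" "saturated S" "(a, b) \<in> S"
      have "h ` S \<subseteq> {0..<n} \<times> {0..<p}" using S(1) assms by (auto simp: h_def sw_lt)
      moreover have "(0,0) \<in> h ` S" using S(3) by (force simp: h_def sw_def)
      moreover have "saturated (h ` S)"
        unfolding saturated_def
      proof (intro allI impI)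
        fix x y x' y' assume H: "(x, x') \<in> h ` S \<and> (x, y') \<in> h ` S \<and> (y, y') \<in> h ` S"
        have mem: "(u, v) \<in> h ` S \<longleftrightarrow> (sw a u, sw b v) \<in> S" for u v
        proof
          assume "(u, v) \<in> h ` S" then obtain c where "c \<in> S" "(u,v) = h c" by auto
          then have "h (u,v) = c" using hh[of c] by simp
          then show "(sw a u, sw b v) \<in> S" using \<open>c \<in> S\<close> by (simp add: h_def)
        next
          assume "(sw a u, sw b v) \<in> S"
          then show "(u, v) \<in> h ` S" by (rule rev_image_eqI) (simp add: h_def sw_sw)
        qed
        show "(y, x') \<in> h ` S" using H S(2) unfolding mem saturated_def by blast
      qed
      ultimately show "h ` S \<subseteq> {0..<n} \<times> {0..<p} \<and> saturated (h ` S) \<and> (0, 0) \<in> h ` S" by blast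
    qed
  qed (rule fin)
qed

context three begin

lemma finite_Q: "finite Q"
  by (rule finite_subset[of _ "{..<m} \<times> Pow grid"]) (auto simp: Q_def grid_def)

lemma card_Q: assumes "FM \<noteq> {}" shows "card Q \<le> (m - 1) * alpha n p + alpha' n p"
proof -
  define Sat where "Sat = {S. S \<subseteq> grid \<and> saturated S}"
  define Sat0 where "Sat0 = {S. S \<subseteq> grid \<and> saturated S \<and> (qN, qP) \<in> S}"
  have finSat: "finite Sat" unfolding Sat_def by (rule finite_subset[of _ "Pow grid"]) (auto simp: grid_def)
  have alpha: "alpha n p = card Sat" unfolding Sat_def alpha_def grid_def ..
  have s0: "card Sat0 \<le> alpha' n p" unfolding Sat0_def grid_def by (rule alpha'_le[OF qN qP])
  have a'a: "alpha' n p \<le> alpha n p" unfolding alpha'_def alpha_def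
    by (rule card_mono) (use finSat in \<open>auto simp: Sat_def grid_def\<close>)
  have FMs: "FM \<subseteq> {0..<m}" using M by (auto simp: is_dfa_def)
  have finFM: "finite FM" using FMs finite_subset by blast
  have "Q \<subseteq> (({0..<m} - FM) \<times> Sat) \<union> (FM \<times> Sat0)"
    by (auto simp: Q_def Sat_def Sat0_def)
  then have "card Q \<le> card ((({0..<m} - FM) \<times> Sat) \<union> (FM \<times> Sat0))"
  proof (rule card_mono[rotated])
    have "finite Sat0" by (rule finite_subset[OF _ finSat]) (auto simp: Sat_def Sat0_def)
    then show "finite ((({0..<m} - FM) \<times> Sat) \<union> (FM \<times> Sat0))" using finSat finFM by auto
  qed
  also have "\<dots> \<le> card (({0..<m} - FM) \<times> Sat) + card (FM \<times> Sat0)" by (rule card_Un_le)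
  also have "\<dots> = (m - card FM) * alpha n p + card FM * card Sat0"
    using FMs finFM by (simp add: card_cartesian_product alpha card_Diff_subset)
  also have "\<dots> \<le> (m - card FM) * alpha n p + card FM * alpha' n p" using s0 by simp
  also have "\<dots> \<le> (m - 1) * alpha n p + alpha' n p"
  proof -
    have f1: "card FM \<ge> 1" using assms finFM by (simp add: Suc_leI card_gt_0_iff)
    have fm: "card FM \<le> m" using card_mono[OF _ FMs] by simp
    obtain g where g: "card FM = 1 + g" using f1 le_Suc_ex by blast
    obtain h where h: "m = card FM + h" using fm le_Suc_ex le_iff_add by blast
    have "g * alpha' n p \<le> g * alpha n p" using a'a by simp
    then show ?thesis unfolding h g by (simp add: algebra_simps)
  qed
  finally show ?thesis .
qed

end


lemma sc_dfa:
  assumes "regular_lang \<Sigma> L"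
  shows "\<exists>q0 \<delta> F. is_dfa \<Sigma> (sc \<Sigma> L) q0 \<delta> F \<and> dfa_lang \<Sigma> q0 \<delta> F = L"
  using assms unfolding regular_lang_def sc_def by (rule LeastI_ex)

lemma sc_empty: "sc \<Sigma> {} \<le> 1"
proof -
  have "is_dfa \<Sigma> 1 0 (\<lambda>_ _. 0) {}" "dfa_lang \<Sigma> 0 (\<lambda>_ _. 0) {} = {}"
    by (auto simp: is_dfa_def dfa_lang_def)
  then show ?thesis unfolding sc_def by (intro Least_le) blast
qed

lemma alpha'_pos: assumes "n \<ge> 1" "p \<ge> 1" shows "alpha' n p \<ge> 1"
proof -
  have fin: "finite {S. S \<subseteq> {0..<n} \<times> {0..<p} \<and> saturated S \<and> (0, 0) \<in> S}"
    by (rule finite_subset[of _ "Pow ({0..<n} \<times> {0..<p})"]) auto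
  have "{0..<n} \<times> {0..<p} \<in> {S. S \<subseteq> {0..<n} \<times> {0..<p} \<and> saturated S \<and> (0, 0) \<in> S}"
    using assms by (auto simp: saturated_def)
  then have "{S. S \<subseteq> {0..<n} \<times> {0..<p} \<and> saturated S \<and> (0, 0) \<in> S} \<noteq> {}" by blast
  then have "card {S. S \<subseteq> {0..<n} \<times> {0..<p} \<and> saturated S \<and> (0, 0) \<in> S} > 0"
    using fin card_gt_0_iff by blast
  then show ?thesis unfolding alpha'_def by simp
qed

theorem theorem1:
  fixes \<Sigma> :: "'a set" and M N P :: "'a list set" and m n p :: nat
  assumes "finite \<Sigma>"
    and "regular_lang \<Sigma> M" and "regular_lang \<Sigma> N" and "regular_lang \<Sigma> P"
    and "sc \<Sigma> M = m" and "sc \<Sigma> N = n" and "sc \<Sigma> P = p"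
    and "m \<ge> 3" and "n \<ge> 3" and "p \<ge> 3"
  shows "sc \<Sigma> (lang_conc M (sym_diff N P)) \<le> (m - 1) * alpha n p + alpha' n p"
proof -
  obtain qM dM FM where dM: "is_dfa \<Sigma> m qM dM FM" "dfa_lang \<Sigma> qM dM FM = M"
    using sc_dfa[OF assms(2)] assms(5) by blast
  obtain qN dN FN where dN: "is_dfa \<Sigma> n qN dN FN" "dfa_lang \<Sigma> qN dN FN = N"
    using sc_dfa[OF assms(3)] assms(6) by blast
  obtain qP dP FP where dP: "is_dfa \<Sigma> p qP dP FP" "dfa_lang \<Sigma> qP dP FP = P"
    using sc_dfa[OF assms(4)] assms(7) by blast
  interpret t: three \<Sigma> m qM dM FM n qN dN FN p qP dP FP
    using dM dN dP by unfold_locales auto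
  show ?thesis
  proof (cases "FM = {}")
    case True
    then have "M = {}" using dM(2) by (auto simp: dfa_lang_def)
    then have "lang_conc M (sym_diff N P) = {}" by (simp add: lang_conc_def)
    then have "sc \<Sigma> (lang_conc M (sym_diff N P)) \<le> 1" using sc_empty by simp
    also have "1 \<le> alpha' n p" using alpha'_pos assms(9,10) by simp
    finally show ?thesis by simp
  next
    case False
    have "sc \<Sigma> (lang_conc M (sym_diff N P)) = sc \<Sigma> {w \<in> lists \<Sigma>. foldl t.step t.init w \<in> t.Fin}"
      using t.lang dM(2) dN(2) dP(2) by simp
    also have "\<dots> \<le> card t.Q" by (rule sc_le_card[OF t.finite_Q t.init_Q t.step_Q])
    also have "\<dots> \<le> (m - 1) * alpha n p + alpha' n p" by (rule t.card_Q[OF False])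
    finally show ?thesis .
  qed
qed


end
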